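(* The $2\times2\times2$ quaternion tensor $$T=\left(\begin{bmatrix}1&0\\0&1\end{bmatrix};\begin{bmatrix}0&1\\0&0\end{bmatrix}\right)$$ has $\mathrm{rank}(T)=3$.
   Context: $\mathbb{H}$ denotes the real quaternions. An $n_1\times n_2\times n_3$ quaternion tensor is an array $T=(T_{ijk})$ with entries in $\mathbb{H}$, $1\le i\le n_1$, $1\le j\le n_2$, $1\le k\le n_3$; it is written $T=(A_1;\dots;A_{n_2})$ where the frontal slice $A_j$ is the $n_1\times n_3$ matrix $(T_{ijk})_{i,k}$. A nonzero tensor is simple if $T_{ijk}=a_ib_jc_k$ (quaternion product in this order) for some $\vec a\in\mathbb{H}^{n_1},\vec b\in\mathbb{H}^{n_2},\vec c\in\mathbb{H}^{n_3}$. The rank of $T$ is the least number of simple tensors summing to $T$. *)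

theory Defs
  imports Complex_Main
begin

datatype quat = Quat (qre: real) (qi: real) (qj: real) (qk: real)

instantiation quat :: ring_1
begin
definition "0 = Quat 0 0 0 0"
definition "1 = Quat 1 0 0 0"
definition "x + y = Quat (qre x + qre y) (qi x + qi y) (qj x + qj y) (qk x + qk y)"
definition "x - y = Quat (qre x - qre y) (qi x - qi y) (qj x - qj y) (qk x - qk y)"
definition "- x = Quat (- qre x) (- qi x) (- qj x) (- qk x)"
text \<open>Hamilton product: i^2 = j^2 = k^2 = ijk = -1.\<close>
definition "x * y = Quat
  (qre x * qre y - qi x * qi y - qj x * qj y - qk x * qk y)
  (qre x * qi y + qi x * qre y + qj x * qk y - qk x * qj y)
  (qre x * qj y - qi x * qk y + qj x * qre y + qk x * qi y)
  (qre x * qk y + qi x * qj y - qj x * qi y + qk x * qre y)"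
instance
  by standard (simp_all add: zero_quat_def one_quat_def plus_quat_def minus_quat_def
      uminus_quat_def times_quat_def quat.expand algebra_simps)
end

text \<open>An n1 x n2 x n3 quaternion tensor is represented as a function of three
  indices (0-based), only the values with i < n1, j < n2, k < n3 being relevant.\<close>

type_synonym qtensor = "nat \<Rightarrow> nat \<Rightarrow> nat \<Rightarrow> quat"

definition simple_tensor :: "nat \<Rightarrow> nat \<Rightarrow> nat \<Rightarrow> qtensor \<Rightarrow> bool" where
  "simple_tensor n1 n2 n3 S \<longleftrightarrow>
     (\<exists>i<n1. \<exists>j<n2. \<exists>k<n3. S i j k \<noteq> 0) \<and>
     (\<exists>a b c :: nat \<Rightarrow> quat. \<forall>i<n1. \<forall>j<n2. \<forall>k<n3. S i j k = a i * b j * c k)"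

definition tensor_rank :: "nat \<Rightarrow> nat \<Rightarrow> nat \<Rightarrow> qtensor \<Rightarrow> nat" where
  "tensor_rank n1 n2 n3 T = (LEAST r. \<exists>Ss :: nat \<Rightarrow> qtensor.
      (\<forall>l<r. simple_tensor n1 n2 n3 (Ss l)) \<and>
      (\<forall>i<n1. \<forall>j<n2. \<forall>k<n3. T i j k = (\<Sum>l<r. Ss l i j k)))"

end

theory Submission
  imports Defs
begin

instantiation quat :: division_ring
begin
definition "inverse x = (let n = qre x^2 + qi x^2 + qj x^2 + qk x^2 in
   Quat (qre x / n) (- qi x / n) (- qj x / n) (- qk x / n))"
definition "divide x y = x * inverse (y::quat)"

lemma quat_nz: "(x::quat) \<noteq> 0 \<Longrightarrow> qre x^2 + qi x^2 + qj x^2 + qk x^2 \<noteq> 0"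
proof -
  assume "x \<noteq> 0"
  hence "qre x \<noteq> 0 \<or> qi x \<noteq> 0 \<or> qj x \<noteq> 0 \<or> qk x \<noteq> 0"
    by (cases x) (auto simp: zero_quat_def)
  thus ?thesis
    by (smt (verit) power2_less_eq_zero_iff zero_le_power2)
qed

instance
proof
  fix a :: quat
  assume a: "a \<noteq> 0"
  have n: "qre a^2 + qi a^2 + qj a^2 + qk a^2 \<noteq> 0" using quat_nz[OF a] .
  define n where "n = qre a^2 + qi a^2 + qj a^2 + qk a^2"
  have n': "n \<noteq> 0" using n n_def by simp
  have e: "qre a * qre a / n + qi a * qi a / n + qj a * qj a / n + qk a * qk a / n = 1"
    using n' by (simp add: n_def power2_eq_square add_divide_distrib[symmetric])
  have inv: "inverse a = Quat (qre a / n) (- qi a / n) (- qj a / n) (- qk a / n)"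
    by (simp add: inverse_quat_def Let_def n_def)
  show "inverse a * a = 1" using e
    by (simp add: inv times_quat_def one_quat_def algebra_simps)
  show "a * inverse a = 1" using e
    by (simp add: inv times_quat_def one_quat_def algebra_simps)
next
  fix a b :: quat show "divide a b = a * inverse b" by (simp add: divide_quat_def)
next
  show "inverse (0::quat) = 0" by (simp add: inverse_quat_def zero_quat_def)
qed
end

lemma key:
  fixes a b c a' b' c' :: "nat \<Rightarrow> quat"
  assumes h: "\<forall>i<2. \<forall>j<2. \<forall>k<2. (if (i, j, k) \<in> {(0::nat, 0::nat, 0::nat), (1, 0, 1), (0, 1, 1)} then 1 else 0)
       = a i * b j * c k + a' i * b' j * c' k"
  shows False
proof -
  have e000: "a 0 * b 0 * c 0 + a' 0 * b' 0 * c' 0 = 1" using h[rule_format, of 0 0 0] by simp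
  have e001: "a 0 * b 0 * c 1 + a' 0 * b' 0 * c' 1 = 0" using h[rule_format, of 0 0 1] by simp
  have e010: "a 0 * b 1 * c 0 + a' 0 * b' 1 * c' 0 = 0" using h[rule_format, of 0 1 0] by simp
  have e011: "a 0 * b 1 * c 1 + a' 0 * b' 1 * c' 1 = 1" using h[rule_format, of 0 1 1] by simp
  have e100: "a 1 * b 0 * c 0 + a' 1 * b' 0 * c' 0 = 0" using h[rule_format, of 1 0 0] by simp
  have e101: "a 1 * b 0 * c 1 + a' 1 * b' 0 * c' 1 = 1" using h[rule_format, of 1 0 1] by simp
  have e110: "a 1 * b 1 * c 0 + a' 1 * b' 1 * c' 0 = 0" using h[rule_format, of 1 1 0] by simp
  have e111: "a 1 * b 1 * c 1 + a' 1 * b' 1 * c' 1 = 0" using h[rule_format, of 1 1 1] by simp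
  define p where "p = b 1 * c 0"
  define q where "q = b' 1 * c' 0"
  have f0: "a 0 * p + a' 0 * q = 0" using e010 by (simp add: p_def q_def mult.assoc)
  have f1: "a 1 * p + a' 1 * q = 0" using e110 by (simp add: p_def q_def mult.assoc)
  show False
  proof (cases "p = 0")
    case False
    define s where "s = - (q * inverse p)"
    have sp: "s * p = - q" using False by (simp add: s_def mult.assoc)
    have g: "x = y * s" if "x * p + y * q = 0" for x y
    proof -
      have "(x - y * s) * p = x * p + y * q" by (simp add: algebra_simps mult.assoc sp)
      hence "(x - y * s) * p = 0" using that by simp
      thus ?thesis using False by simp
    qed
    have a0: "a 0 = a' 0 * s" using g f0 .
    have a1: "a 1 = a' 1 * s" using g f1 .
    define m where "m = s * b 0 * c 1 + b' 0 * c' 1"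
    define m0 where "m0 = s * b 0 * c 0 + b' 0 * c' 0"
    have "a' 0 * m0 = 1" using e000 unfolding a0 by (simp add: m0_def algebra_simps mult.assoc)
    hence "a' 0 \<noteq> 0" by auto
    moreover have "a' 0 * m = 0" using e001 unfolding a0 by (simp add: m_def algebra_simps mult.assoc)
    ultimately have "m = 0" by simp
    moreover have "a' 1 * m = 1" using e101 unfolding a1 by (simp add: m_def algebra_simps mult.assoc)
    ultimately show False by simp
  next
    case p0: True
    show False
    proof (cases "q = 0")
      case False
      hence "a' 0 = 0" "a' 1 = 0" using f0 f1 p0 by auto
      hence "a 0 * b 0 * c 1 = 0" "a 1 * b 0 * c 1 = 1" using e001 e101 by auto
      hence "a 0 = 0" by (metis mult_eq_0_iff mult.assoc zero_neq_one)
      thus False using e000 \<open>a' 0 = 0\<close> by simp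
    next
      case q0: True
      have "b 1 = 0 \<or> c 0 = 0" using p0 p_def by simp
      have "b' 1 = 0 \<or> c' 0 = 0" using q0 q_def by simp
      show False
      proof (cases "b 1 = 0")
        case True
        hence "a' 0 * b' 1 * c' 1 = 1" using e011 by simp
        hence nz: "b' 1 \<noteq> 0" "c' 1 \<noteq> 0" by auto
        hence "c' 0 = 0" using \<open>b' 1 = 0 \<or> c' 0 = 0\<close> by simp
        hence "a 0 * b 0 * c 0 = 1" using e000 by simp
        hence nz2: "b 0 \<noteq> 0" "c 0 \<noteq> 0" by auto
        have "a' 1 * b' 1 * c' 1 = 0" using e111 True by simp
        hence "a' 1 = 0" using nz by simp
        have "a 1 * b 0 * c 0 = 0" using e100 \<open>c' 0 = 0\<close> by simp
        hence "a 1 = 0" using nz2 by simp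
        thus False using e101 \<open>a' 1 = 0\<close> by simp
      next
        case False
        hence c0: "c 0 = 0" using \<open>b 1 = 0 \<or> c 0 = 0\<close> by simp
        hence "a' 0 * b' 0 * c' 0 = 1" using e000 by simp
        hence nz: "b' 0 \<noteq> 0" "c' 0 \<noteq> 0" by auto
        hence "b' 1 = 0" using \<open>b' 1 = 0 \<or> c' 0 = 0\<close> by simp
        hence "a 0 * b 1 * c 1 = 1" using e011 by simp
        hence nz2: "b 1 \<noteq> 0" "c 1 \<noteq> 0" by auto
        have "a 1 * b 1 * c 1 = 0" using e111 \<open>b' 1 = 0\<close> by simp
        hence "a 1 = 0" using nz2 by simp
        have "a' 1 * b' 0 * c' 0 = 0" using e100 c0 by simp
        hence "a' 1 = 0" using nz by simp
        thus False using e101 \<open>a 1 = 0\<close> by simp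
      qed
    qed
  qed
qed


lemma lt2: "(i::nat) < 2 \<longleftrightarrow> i = 0 \<or> i = 1" by auto

theorem mainTheorem6:
  shows "tensor_rank 2 2 2
           (\<lambda>i j k. if (i, j, k) \<in> {(0, 0, 0), (1, 0, 1), (0, 1, 1)} then 1 else 0) = 3"
proof -
  let ?T = "(\<lambda>i j k. if (i, j, k) \<in> {(0::nat, 0::nat, 0::nat), (1, 0, 1), (0, 1, 1)} then 1 else (0::quat))"
  let ?P = "\<lambda>r. \<exists>Ss :: nat \<Rightarrow> qtensor.
      (\<forall>l<r. simple_tensor 2 2 2 (Ss l)) \<and>
      (\<forall>i<2. \<forall>j<2. \<forall>k<2. ?T i j k = (\<Sum>l<r. Ss l i j k))"
  define e0 where "e0 = (\<lambda>i::nat. if i = 0 then (1::quat) else 0)"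
  define e1 where "e1 = (\<lambda>i::nat. if i = 1 then (1::quat) else 0)"
  define Ss where "Ss = (\<lambda>l::nat. if l = 0 then (\<lambda>i j k. e0 i * e0 j * e0 k)
      else if l = 1 then (\<lambda>i j k. e1 i * e0 j * e1 k) else (\<lambda>i j k. e0 i * e1 j * e1 k))"
  have P3: "?P 3"
  proof (intro exI conjI allI impI)
    fix l assume "l < (3::nat)"
    hence "l = 0 \<or> l = 1 \<or> l = 2" by auto
    have st: "simple_tensor 2 2 2 (\<lambda>i j k. x i * y j * z k)"
      if "x p * y q * z t \<noteq> 0" "p < 2" "q < 2" "t < 2" for x y z :: "nat \<Rightarrow> quat" and p q t
      unfolding simple_tensor_def using that by blast
    have s0: "simple_tensor 2 2 2 (\<lambda>i j k. e0 i * e0 j * e0 k)"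
      by (rule st[of _ 0 _ 0 _ 0]) (auto simp: e0_def)
    have s1: "simple_tensor 2 2 2 (\<lambda>i j k. e1 i * e0 j * e1 k)"
      by (rule st[of _ 1 _ 0 _ 1]) (auto simp: e0_def e1_def)
    have s2: "simple_tensor 2 2 2 (\<lambda>i j k. e0 i * e1 j * e1 k)"
      by (rule st[of _ 0 _ 1 _ 1]) (auto simp: e0_def e1_def)
    from \<open>l = 0 \<or> l = 1 \<or> l = 2\<close> show "simple_tensor 2 2 2 (Ss l)"
      using s0 s1 s2 by (auto simp: Ss_def)
  next
    fix i j k :: nat assume "i < 2" "j < 2" "k < 2"
    thus "?T i j k = (\<Sum>l<3. Ss l i j k)"
      by (auto simp: lt2 numeral_3_eq_3 Ss_def e0_def e1_def)
  qed
  have lower: "3 \<le> r" if Pr: "?P r" for r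
  proof (rule ccontr)
    assume "\<not> 3 \<le> r"
    hence r: "r = 0 \<or> r = 1 \<or> r = 2" by auto
    obtain Ss where S: "\<forall>l<r. simple_tensor 2 2 2 (Ss l)"
      "\<forall>i<2. \<forall>j<2. \<forall>k<2. ?T i j k = (\<Sum>l<r. Ss l i j k)" using Pr by blast
    have ex: "\<exists>a b c :: nat \<Rightarrow> quat. \<forall>i<2. \<forall>j<2. \<forall>k<2. Ss l i j k = a i * b j * c k"
      if "l < r" for l using S(1) that unfolding simple_tensor_def by blast
    show False
    proof (cases "r = 0")
      case True
      thus False using S(2) by (auto dest!: spec[of _ 0])
    next
      case False
      then obtain a b c where abc: "\<forall>i<2. \<forall>j<2. \<forall>k<2. Ss 0 i j k = a i * b j * c k"
        using ex[of 0] by auto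
      show False
      proof (cases "r = 1")
        case True
        have "\<forall>i<2. \<forall>j<2. \<forall>k<2. ?T i j k = a i * b j * c k + (\<lambda>_. 0) i * (\<lambda>_. 0) j * (\<lambda>_. 0) k"
          using S(2) abc True by simp
        thus False by (rule key)
      next
        case False
        hence "r = 2" using r \<open>r \<noteq> 0\<close> by auto
        then obtain a' b' c' where abc': "\<forall>i<2. \<forall>j<2. \<forall>k<2. Ss 1 i j k = a' i * b' j * c' k"
          using ex[of 1] by auto
        have "\<forall>i<2. \<forall>j<2. \<forall>k<2. ?T i j k = a i * b j * c k + a' i * b' j * c' k"
          using S(2) abc abc' \<open>r = 2\<close> by (simp add: numeral_2_eq_2)
        thus False by (rule key)
      qed
    qed
  qed
  show ?thesis unfolding tensor_rank_def
    by (rule Least_equality[where P = ?P, OF P3 lower])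
qed

end
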